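(* Let $0<c<1/2$, and for integers $j\ge0$ set $c_j=c+c^2+\dots+c^j$ (so $c_0=0$). Then for every $B\in\mathcal F$ and every integer $m$ with $0\le m\le k:=\mu(B)$, $$g(m,B)\le 2c_1+2c_2+\dots+2c_{m-1}+c_m+c_m\,c_{k-m},$$ where $g(m,B)=\sum_{i\in\mathrm{OPT}^m_{\mathrm{large}}(B)}\sum_{B'\in\mathrm{Chain}[M(i),B]} c^{\,1+\mathrm{brank}(i,B')}$.
   Context: Let $U$ be a finite ground set with weight function $w:U\to\mathbb{R}_{\ge0}$ taking pairwise distinct values. Let $\mathcal F$ be a laminar family of subsets of $U$ (for any $A,B\in\mathcal F$: $A\subseteq B$, $B\subseteq A$, or $A\cap B=\emptyset$) with $U\in\mathcal F$; each $A\in\mathcal F$ has a positive integer capacity $\mu(A)$, with $\mu(A)<\mu(B)$ whenever $A\subsetneq B$. A set $X\subseteq U$ is independent iff $|X\cap A|\le\mu(A)$ for all $A\in\mathcal F$. For $i\in U$, $M(i)$ denotes the minimal member of $\mathcal F$ containing $i$. For $A\subseteq B$ in $\mathcal F$, $\mathrm{Chain}[A,B]$ is the sequence of all $B'\in\mathcal F$ with $A\subseteq B'\subseteq B$, ordered by inclusion from $A$ up to $B$. For $B\in\mathcal F$, $\mathrm{OPT}(B)$ is the maximum-weight independent subset of $B$, and $\mathrm{OPT}^m_{\mathrm{large}}(B)$ is the set of the $m$ largest-weight elements of $\mathrm{OPT}(B)$ (all of $\mathrm{OPT}(B)$ if it has fewer than $m$ elements). The backward rank $\mathrm{brank}(i,B)$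 is the number of elements of $\mathrm{OPT}(B)$ of weight less than $w(i)$. Standing convention of the paper: by padding $U$ with dummy elements of infinitesimal weight, one assumes $|\mathrm{OPT}(B)|=\mu(B)$ for every $B\in\mathcal F$. *)

theory Defs
  imports Complex_Main
begin

definition laminar :: "'a set set \<Rightarrow> bool" where
  "laminar F \<longleftrightarrow> (\<forall>A\<in>F. \<forall>B\<in>F. A \<subseteq> B \<or> B \<subseteq> A \<or> A \<inter> B = {})"

definition indep :: "'a set set \<Rightarrow> ('a set \<Rightarrow> nat) \<Rightarrow> 'a set \<Rightarrow> bool" where
  "indep F \<mu> X \<longleftrightarrow> (\<forall>A\<in>F. card (X \<inter> A) \<le> \<mu> A)"

definition is_OPT :: "'a set set \<Rightarrow> ('a set \<Rightarrow> nat) \<Rightarrow> ('a \<Rightarrow> real) \<Rightarrow> 'a set \<Rightarrow> 'a set \<Rightarrow> bool" where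
  "is_OPT F \<mu> w B X \<longleftrightarrow> X \<subseteq> B \<and> indep F \<mu> X \<and>
     (\<forall>Y. Y \<subseteq> B \<longrightarrow> indep F \<mu> Y \<longrightarrow> sum w Y \<le> sum w X)"

definition minset :: "'a set set \<Rightarrow> 'a \<Rightarrow> 'a set" where
  "minset F i = (THE A. A \<in> F \<and> i \<in> A \<and> (\<forall>A'\<in>F. i \<in> A' \<longrightarrow> A \<subseteq> A'))"

definition chain_between :: "'a set set \<Rightarrow> 'a set \<Rightarrow> 'a set \<Rightarrow> 'a set set" where
  "chain_between F A B = {B'\<in>F. A \<subseteq> B' \<and> B' \<subseteq> B}"

text \<open>The m largest-weight elements of a set X (all of X if |X| < m), weights distinct.\<close>
definition large :: "('a \<Rightarrow> real) \<Rightarrow> nat \<Rightarrow> 'a set \<Rightarrow> 'a set" where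
  "large w m X = {i\<in>X. card {j\<in>X. w j > w i} < m}"

definition brank :: "('a \<Rightarrow> real) \<Rightarrow> 'a set \<Rightarrow> 'a \<Rightarrow> nat" where
  "brank w OPTB i = card {j\<in>OPTB. w j < w i}"

definition csum :: "real \<Rightarrow> nat \<Rightarrow> real" where
  "csum c j = (\<Sum>t=1..j. c ^ t)"

definition gfun :: "'a set set \<Rightarrow> ('a \<Rightarrow> real) \<Rightarrow> ('a set \<Rightarrow> 'a set) \<Rightarrow> real \<Rightarrow> nat \<Rightarrow> 'a set \<Rightarrow> real" where
  "gfun F w OPT c m B = (\<Sum>i\<in>large w m (OPT B).
      \<Sum>B'\<in>chain_between F (minset F i) B. c ^ (1 + brank w (OPT B') i))"

end

theory Submission
  imports Defs
begin


definition sq :: "real \<Rightarrow> real" where "sq q = q / (1 - q)"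

definition Fn :: "real \<Rightarrow> nat \<Rightarrow> nat \<Rightarrow> real" where
  "Fn q a K = 2 * sq q * a - sq q - (sq q)^2 + sq q * (1 + sq q) * q^a
      + (sq q)^2 * q^K - (sq q)^2 * q^K / q^a"

lemma sq_eq: "q < 1 \<Longrightarrow> sq q * (1 - q) = q"
  unfolding sq_def by simp

lemma csum_closed: assumes "0 < q" "q < 1" shows "csum q j = sq q * (1 - q^j)"
proof (induction j)
  case 0 then show ?case by (simp add: csum_def)
next
  case (Suc j)
  have "csum q (Suc j) = csum q j + q^(Suc j)" by (simp add: csum_def)
  also have "\<dots> = sq q * (1 - q^j) + q^(Suc j)" using Suc by simp
  also have "\<dots> = sq q * (1 - q^(Suc j)) + q^j * (q - sq q * (1 - q))"
    by (simp add: algebra_simps)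
  also have "\<dots> = sq q * (1 - q^(Suc j))"
    using sq_eq[OF assms(2)] by simp
  finally show ?case .
qed

lemma Fn0: "Fn q 0 K = 0"
  unfolding Fn_def by (simp add: algebra_simps power2_eq_square)

lemma Fn_step: assumes "0 < q" "q < 1" "m \<le> k" "1 \<le> k"
  shows "Fn q m k = q^(k-m) * csum q m + Fn q m (k-1)"
proof -
  define s where "s = sq q"
  have s: "s * (1 - q) = q" using sq_eq assms s_def by simp
  define p where "p = q^(k-m)"
  define r where "r = q^m"
  have k: "q^k = p * r" unfolding p_def r_def using assms by (simp add: power_add[symmetric])
  have k1: "q^(k-1) = p * r / q" using assms k
    by (metis diff_Suc_1 nonzero_eq_divide_eq not_one_le_zero not0_implies_Suc less_irrefl power_Suc2 mult.commute)
  have r0: "r > 0" unfolding r_def using assms by simp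
  have "Fn q m k - Fn q m (k-1) = s^2 * (p*r - p - p*r/q + p/q)"
    unfolding Fn_def s_def[symmetric] k k1 r_def[symmetric] using r0 assms by (simp add: field_simps)
  also have "\<dots> = s^2 * (1-q) / q * p * (1 - r)" using assms by (simp add: field_simps)
  also have "\<dots> = s * p * (1 - r)"
  proof -
    have "s^2 * (1-q) = s * (s * (1-q))" by (simp add: power2_eq_square)
    also have "\<dots> = s * q" using s by simp
    finally have "s^2 * (1-q) / q = s" using assms by simp
    then show ?thesis by simp
  qed
  also have "\<dots> = p * csum q m" using csum_closed[OF assms(1,2)] s_def r_def by simp
  finally show ?thesis unfolding p_def by simp
qed

lemma sq_rel: "q < 1 \<Longrightarrow> sq q = q + q * sq q"
  using sq_eq[of q] by (simp add: algebra_simps)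

lemma Fn_super: assumes "0 < q" "q < 1" "a + b \<le> K + 1"
  shows "Fn q a K + Fn q b K \<le> Fn q (a+b) K"
proof -
  define s where "s = sq q"
  have s: "s = q + q * s" using sq_rel assms s_def by simp
  define x where "x = q^a"
  define y where "y = q^b"
  define Q where "Q = q^K"
  have x0: "0 < x" "x \<le> 1" unfolding x_def using assms by (auto intro: power_le_one)
  have y0: "0 < y" "y \<le> 1" unfolding y_def using assms by (auto intro: power_le_one)
  have Q0: "0 < Q" unfolding Q_def using assms by simp
  have xy: "q^(a+b) = x * y" unfolding x_def y_def by (simp add: power_add)
  have "Fn q a K + Fn q b K - Fn q (a+b) K = (1-x)*(1-y)*(s^2*Q/(x*y) - s*(1+s))"
    unfolding Fn_def s_def[symmetric] xy x_def[symmetric] y_def[symmetric] Q_def[symmetric]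
    using x0 y0 by (simp add: field_simps power2_eq_square)
  also have "\<dots> \<le> 0"
  proof (rule mult_nonneg_nonpos)
    show "0 \<le> (1-x)*(1-y)" using x0 y0 by simp
    have "q^(K+1) \<le> q^(a+b)" using assms by (intro power_decreasing) auto
    then have "Q * q \<le> x * y" using xy Q_def by (simp add: mult.commute)
    then have "Q / (x*y) \<le> 1 / q" using x0 y0 assms Q0 by (simp add: field_simps)
    then have "s^2 * (Q / (x*y)) \<le> s^2 * (1/q)" by (intro mult_left_mono) auto
    also have "s^2 * (1/q) = s * (1+s)"
    proof -
      have "s^2 = q * (s * (1+s))" using s by (simp add: power2_eq_square algebra_simps) (metis distrib_left mult.assoc mult.commute)
      then show ?thesis using assms by simp
    qed
    finally show "s^2*Q/(x*y) - s*(1+s) \<le> 0" by simp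
  qed
  finally show ?thesis by simp
qed

lemma Fn_Suc: assumes "0 < q" "q < 1" "a \<le> K"
  shows "Fn q a K \<le> Fn q (Suc a) K"
proof -
  define s where "s = sq q"
  have s: "s = q + q * s" using sq_rel assms s_def by simp
  have s0: "s \<ge> 0" unfolding s_def sq_def using assms by simp
  define x where "x = q^a"
  define Q where "Q = q^K"
  have x0: "0 < x" "x \<le> 1" unfolding x_def using assms by (auto intro: power_le_one)
  have Qx: "Q / x \<le> 1"
  proof -
    have "q^K \<le> q^a" using assms by (intro power_decreasing) auto
    then show ?thesis using x0 unfolding Q_def x_def by simp
  qed
  have qs: "q^(Suc a) = q * x" unfolding x_def by simp
  have "Fn q (Suc a) K - Fn q a K = 2*s - s*(1+s)*(1-q)*x - s^2*(1-q)/q * (Q/x)"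
    unfolding Fn_def s_def[symmetric] qs x_def[symmetric] Q_def[symmetric]
    using x0 assms by (simp add: field_simps power2_eq_square)
  also have "s*(1+s)*(1-q) = s"
  proof -
    have "s*(1-q) = q" using s by (simp add: algebra_simps)
    then have "s*(1+s)*(1-q) = (1+s)*q" by (metis mult.commute mult.left_commute)
    then show ?thesis using s by (simp add: algebra_simps)
  qed
  also have "s^2*(1-q)/q = s"
  proof -
    have "s^2 * (1-q) = s * (s - s*q)" by (simp add: power2_eq_square algebra_simps)
    also have "s - s * q = q" using s by (simp add: algebra_simps)
    finally show ?thesis using assms by simp
  qed
  finally have "Fn q (Suc a) K - Fn q a K = s * (1 - x) + s * (1 - Q/x)" by (simp add: algebra_simps)
  moreover have "s * (1 - x) \<ge> 0" "s * (1 - Q/x) \<ge> 0" using s0 x0 Qx by auto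
  ultimately show ?thesis by simp
qed

lemma Fn_mono: assumes "0 < q" "q < 1" "a \<le> b" "b \<le> K + 1"
  shows "Fn q a K \<le> Fn q b K"
proof -
  have "\<forall>b. a \<le> b \<longrightarrow> b \<le> K + 1 \<longrightarrow> b - a = d \<longrightarrow> Fn q a K \<le> Fn q b K" for d
  proof (induction d)
    case 0 then show ?case by auto
  next
    case (Suc d)
    show ?case
    proof (intro allI impI)
      fix b assume h: "a \<le> b" "b \<le> K + 1" "b - a = Suc d"
      then obtain b' where b: "b = Suc b'" by (cases b) auto
      have "Fn q a K \<le> Fn q b' K" using Suc h b by auto
      also have "\<dots> \<le> Fn q b K" using Fn_Suc[OF assms(1,2), of b' K] h b by auto
      finally show "Fn q a K \<le> Fn q b K" .
    qed
  qed
  then show ?thesis using assms by blast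
qed

lemma Fn_SucK: assumes "0 < q" "q < 1"
  shows "Fn q a K \<le> Fn q a (Suc K)"
proof -
  define s where "s = sq q"
  define x where "x = q^a"
  define Q where "Q = q^K"
  have x0: "0 < x" "x \<le> 1" unfolding x_def using assms by (auto intro: power_le_one)
  have Q0: "Q > 0" unfolding Q_def using assms by simp
  have qs: "q^(Suc K) = q * Q" unfolding Q_def by simp
  have "Fn q a (Suc K) - Fn q a K = s^2 * Q * (1-q) * (1/x - 1)"
    unfolding Fn_def s_def[symmetric] qs x_def[symmetric] Q_def[symmetric]
    using x0 assms by (simp add: field_simps power2_eq_square)
  moreover have "s^2 * Q * (1-q) * (1/x - 1) \<ge> 0" using x0 Q0 assms by simp
  ultimately show ?thesis by simp
qed

lemma Fn_monoK: assumes "0 < q" "q < 1" "K \<le> K'"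
  shows "Fn q a K \<le> Fn q a K'"
  using assms(3)
proof (induction K' rule: dec_induct)
  case base then show ?case by simp
next
  case (step n) then show ?case using Fn_SucK[OF assms(1,2), of a n] by simp
qed

lemma csum_Suc: assumes "0 < q" "q < 1" shows "csum q (Suc n) = q * (1 + csum q n)"
proof -
  have s: "sq q = q + q * sq q" using sq_rel assms by simp
  show ?thesis unfolding csum_closed[OF assms] using s by (simp add: algebra_simps)
qed

lemma Gsum: assumes "0 < q" "q < 1" "n \<le> k"
  shows "(\<Sum>r<n. q^(k-r)) = q^(k-n) * csum q n"
  using assms(3)
proof (induction n)
  case 0 then show ?case by (simp add: csum_def)
next
  case (Suc n)
  have kn: "k - n = Suc (k - Suc n)" using Suc by simp
  have "(\<Sum>r<Suc n. q^(k-r)) = q^(k-n) * csum q n + q^(k-n)" using Suc by simp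
  also have "\<dots> = q^(k - Suc n) * (q * (1 + csum q n))" unfolding kn by (simp add: algebra_simps)
  finally show ?case using csum_Suc[OF assms(1,2)] by simp
qed

lemma Csum_closed: assumes "0 < q" "q < 1"
  shows "(\<Sum>j=1..<Suc n. csum q j) = sq q * n - sq q * csum q n"
proof (induction n)
  case 0 then show ?case by (simp add: csum_def)
next
  case (Suc n)
  have s: "sq q = q + q * sq q" using sq_rel assms by simp
  have "(\<Sum>j=1..<Suc (Suc n). csum q j) = sq q * n - sq q * csum q n + csum q (Suc n)"
    using Suc by simp
  also have "\<dots> = sq q * Suc n - sq q * csum q (Suc n) + q^n * sq q * (sq q * (1 - q) - q)"
    unfolding csum_closed[OF assms] by (simp add: algebra_simps)
  also have "\<dots> = sq q * Suc n - sq q * csum q (Suc n)"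
    using sq_eq[of q] assms by simp
  finally show ?case .
qed

lemma Fn_final: assumes "0 < q" "q < 1" "m \<le> k"
  shows "Fn q m k = 2 * (\<Sum>j=1..<m. csum q j) + csum q m + csum q m * csum q (k - m)"
proof (cases m)
  case 0 then show ?thesis by (simp add: Fn0 csum_def)
next
  case (Suc n)
  define s where "s = sq q"
  have s: "s = q + q * s" using sq_rel assms s_def by simp
  define x where "x = q^n"
  define p where "p = q^(k-m)"
  have qm: "q^m = q * x" unfolding x_def Suc by simp
  have qk: "q^k = p * (q * x)" unfolding p_def qm[symmetric] using assms by (simp add: power_add[symmetric])
  have x0: "x > 0" unfolding x_def using assms by simp
  have e1: "csum q m = s*(1 - q*x)" unfolding csum_closed[OF assms(1,2)] s_def qm by simp
  have e2: "csum q (k-m) = s*(1 - p)" unfolding csum_closed[OF assms(1,2)] s_def p_def by simp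
  have e3: "(\<Sum>j=1..<m. csum q j) = s * n - s * (s * (1 - x))"
    using Csum_closed[OF assms(1,2), of n] csum_closed[OF assms(1,2), of n] unfolding Suc s_def x_def by simp
  have e4: "Fn q m k = 2*s*(n+1) - s - s^2 + s*(1+s)*(q*x) + s^2*(p*(q*x)) - s^2*p"
  proof -
    have "s^2*(p*(q*x))/(q*x) = s^2*p" using x0 assms by simp
    then show ?thesis unfolding Fn_def s_def[symmetric] qk qm by (simp add: Suc)
  qed
  have "Fn q m k - (2 * (\<Sum>j=1..<m. csum q j) + csum q m + csum q m * csum q (k - m))
      = 2 * x * s * (q + q * s - s)"
    unfolding e1 e2 e3 e4 by (simp add: algebra_simps power2_eq_square)
  also have "\<dots> = 0" using s by simp
  finally show ?thesis by simp
qed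



lemma rank_lt: fixes w :: "'a \<Rightarrow> real"
  assumes "finite T" "i \<in> T" "j \<in> T" "w i < w j"
  shows "card {l\<in>T. w j < w l} < card {l\<in>T. w i < w l}"
  by (rule psubset_card_mono) (use assms in auto)

lemma rank_bij: fixes w :: "'a \<Rightarrow> real"
  assumes "finite T" "inj_on w T"
  shows "bij_betw (\<lambda>i. card {j\<in>T. w i < w j}) T {..<card T}"
proof -
  let ?r = "\<lambda>i. card {j\<in>T. w i < w j}"
  have inj: "inj_on ?r T"
  proof (rule inj_onI, rule ccontr)
    fix i j assume h: "i \<in> T" "j \<in> T" "?r i = ?r j" "i \<noteq> j"
    then have "w i \<noteq> w j" using assms(2) by (auto dest: inj_onD)
    then consider "w i < w j" | "w j < w i" by linarith
    then show False
    proof cases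
      case 1 then show False using rank_lt[of T i j w] assms(1) h by simp
    next
      case 2 then show False using rank_lt[of T j i w] assms(1) h by simp
    qed
  qed
  have sub: "?r ` T \<subseteq> {..<card T}"
  proof
    fix y assume "y \<in> ?r ` T"
    then obtain i where i: "i \<in> T" "y = ?r i" by auto
    have "{j\<in>T. w i < w j} \<subset> T" using i by auto
    then have "?r i < card T" using psubset_card_mono[OF assms(1)] by blast
    then show "y \<in> {..<card T}" using i by simp
  qed
  have "card (?r ` T) = card {..<card T}" using card_image[OF inj] by simp
  then have "?r ` T = {..<card T}" using sub by (intro card_subset_eq) auto
  then show ?thesis using inj unfolding bij_betw_def by simp
qed

locale lam =
  fixes U :: "'a set" and w :: "'a \<Rightarrow> real" and F :: "'a set set"
    and \<mu> :: "'a set \<Rightarrow> nat" and OPT :: "'a set \<Rightarrow> 'a set"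
  assumes finU: "finite U" and injw: "inj_on w U" and lamF: "laminar F" and UF: "U \<in> F"
    and subU: "\<forall>A\<in>F. A \<subseteq> U" and mupos: "\<forall>A\<in>F. \<mu> A > 0"
    and mumono: "\<forall>A\<in>F. \<forall>A'\<in>F. A \<subset> A' \<longrightarrow> \<mu> A < \<mu> A'"
    and opt: "\<forall>A\<in>F. is_OPT F \<mu> w A (OPT A)" and cardopt: "\<forall>A\<in>F. card (OPT A) = \<mu> A"
begin

lemma finF: "finite F"
proof -
  have "F \<subseteq> Pow U" using subU by auto
  then show ?thesis using finU finite_subset by blast
qed

lemma AU: "A \<in> F \<Longrightarrow> A \<subseteq> U" using subU by auto
lemma finA: "A \<in> F \<Longrightarrow> finite A" using AU finU finite_subset by blast
lemma OPTsub: "A \<in> F \<Longrightarrow> OPT A \<subseteq> A" using opt unfolding is_OPT_def by auto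
lemma OPTind: "A \<in> F \<Longrightarrow> indep F \<mu> (OPT A)" using opt unfolding is_OPT_def by auto
lemma OPTmax: "A \<in> F \<Longrightarrow> Y \<subseteq> A \<Longrightarrow> indep F \<mu> Y \<Longrightarrow> sum w Y \<le> sum w (OPT A)"
  using opt unfolding is_OPT_def by auto
lemma finOPT: "A \<in> F \<Longrightarrow> finite (OPT A)" using OPTsub finA finite_subset by blast
lemma indepD: "indep F \<mu> X \<Longrightarrow> A \<in> F \<Longrightarrow> card (X \<inter> A) \<le> \<mu> A"
  unfolding indep_def by auto
lemma lamD: "A \<in> F \<Longrightarrow> B \<in> F \<Longrightarrow> A \<subseteq> B \<or> B \<subseteq> A \<or> A \<inter> B = {}"
  using lamF unfolding laminar_def by auto
lemma Fne: "A \<in> F \<Longrightarrow> A \<noteq> {}"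
  using cardopt mupos OPTsub by fastforce
lemma wdist: "x \<in> U \<Longrightarrow> y \<in> U \<Longrightarrow> x \<noteq> y \<Longrightarrow> w x \<noteq> w y"
  using injw by (auto dest: inj_onD)

lemma tight:
  assumes A: "A \<in> F" "x \<in> A" "x \<notin> OPT A"
  shows "\<exists>C\<in>F. x \<in> C \<and> C \<subseteq> A \<and> card (OPT A \<inter> C) = \<mu> C \<and> (\<forall>y\<in>OPT A \<inter> C. w x < w y)"
proof -
  define X where "X = OPT A"
  have finX: "finite X" and XA: "X \<subseteq> A" and indX: "indep F \<mu> X" and cX: "card X = \<mu> A"
    using finOPT OPTsub OPTind cardopt A unfolding X_def by auto
  have xX: "x \<notin> X" using A X_def by simp
  have "\<not> indep F \<mu> (insert x X)"
  proof
    assume ind: "indep F \<mu> (insert x X)"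
    have "card (insert x X \<inter> A) \<le> \<mu> A" using indepD[OF ind A(1)] .
    moreover have "insert x X \<inter> A = insert x X" using XA A(2) by auto
    moreover have "card (insert x X) = \<mu> A + 1" using finX xX cX by simp
    ultimately show False by simp
  qed
  then obtain D where D: "D \<in> F" "card (insert x X \<inter> D) > \<mu> D" unfolding indep_def by (auto simp: not_le)
  have xD: "x \<in> D"
  proof (rule ccontr)
    assume "x \<notin> D"
    then have "insert x X \<inter> D = X \<inter> D" by auto
    with D indepD[OF indX D(1)] show False by simp
  qed
  have "insert x X \<inter> D = insert x (X \<inter> D)" using xD by auto
  then have "card (insert x X \<inter> D) = card (X \<inter> D) + 1" using finX xX by simp
  then have tD: "card (X \<inter> D) = \<mu> D" using D indepD[OF indX D(1)] by linarith
  define T where "T = {D\<in>F. x \<in> D \<and> card (X \<inter> D) = \<mu> D}"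
  have finT: "finite T" unfolding T_def using finF by simp
  have Tne: "T \<noteq> {}" unfolding T_def using D xD tD by auto
  obtain C where C: "C \<in> T" "\<forall>E\<in>T. E \<subseteq> C \<longrightarrow> C = E"
    using finite_has_minimal[OF finT Tne] by auto
  have CF: "C \<in> F" and xC: "x \<in> C" and tC: "card (X \<inter> C) = \<mu> C" using C(1) T_def by auto
  have CA: "C \<subseteq> A"
  proof -
    have "C \<subseteq> A \<or> A \<subseteq> C \<or> C \<inter> A = {}" using lamD[OF CF A(1)] .
    moreover have "C \<inter> A \<noteq> {}" using xC A(2) by auto
    moreover have False if "A \<subset> C"
    proof -
      have "\<mu> A < \<mu> C" using mumono CF A(1) that by auto
      moreover have "card (X \<inter> C) \<le> card X" using finX by (intro card_mono) auto
      ultimately show False using tC cX by simp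
    qed
    ultimately show ?thesis by auto
  qed
  have heavy: "\<forall>y\<in>X \<inter> C. w x < w y"
  proof (rule ballI, rule ccontr)
    fix y assume y: "y \<in> X \<inter> C" "\<not> w x < w y"
    have yx: "y \<noteq> x" using y xX by auto
    have xU: "x \<in> U" using A AU by auto
    have yU: "y \<in> U" using y XA AU A by auto
    have wy: "w y < w x" using wdist[OF xU yU] yx y(2) by fastforce
    define Z where "Z = insert x (X - {y})"
    have ZA: "Z \<subseteq> A" unfolding Z_def using XA A by auto
    have indZ: "indep F \<mu> Z" unfolding indep_def
    proof
      fix E assume E: "E \<in> F"
      show "card (Z \<inter> E) \<le> \<mu> E"
      proof (cases "x \<in> E")
        case False
        then have "Z \<inter> E \<subseteq> X \<inter> E" unfolding Z_def by auto
        then have "card (Z \<inter> E) \<le> card (X \<inter> E)" using finX by (intro card_mono) auto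
        then show ?thesis using indepD[OF indX E] by simp
      next
        case xE: True
        show ?thesis
        proof (cases "y \<in> E")
          case True
          have "Z \<inter> E = insert x ((X \<inter> E) - {y})" unfolding Z_def using xE by auto
          then have "card (Z \<inter> E) = card ((X \<inter> E) - {y}) + 1" using finX xX by simp
          also have "\<dots> = card (X \<inter> E)" using True y finX
            by (simp add: card_Diff_singleton) (metis Suc_pred card_gt_0_iff empty_iff finite_Int inf.strict_order_iff IntI)
          finally show ?thesis using indepD[OF indX E] by simp
        next
          case False
          have "E \<subseteq> C \<or> C \<subseteq> E \<or> E \<inter> C = {}" using lamD[OF E CF] .
          then have EC: "E \<subseteq> C" using False y xE xC by auto
          have "E \<noteq> C" using False y by auto
          then have "E \<notin> T" using C(2) EC by auto
          then have "card (X \<inter> E) \<noteq> \<mu> E" using E xE unfolding T_def by auto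
          then have lt: "card (X \<inter> E) < \<mu> E" using indepD[OF indX E] by simp
          have "Z \<inter> E \<subseteq> insert x (X \<inter> E)" unfolding Z_def by auto
          then have "card (Z \<inter> E) \<le> card (insert x (X \<inter> E))" using finX by (intro card_mono) auto
          also have "\<dots> \<le> card (X \<inter> E) + 1" using finX by (simp add: card_insert_if)
          finally show ?thesis using lt by simp
        qed
      qed
    qed
    have "sum w Z \<le> sum w X" using OPTmax[OF A(1) ZA indZ] X_def by simp
    moreover have "sum w Z = w x + (sum w X - w y)"
      unfolding Z_def using finX xX y by (simp add: sum_diff1)
    ultimately show False using wy by simp
  qed
  show ?thesis using CF xC CA tC heavy X_def by blast
qed

lemma key:
  assumes BF: "B' \<in> F" "B \<in> F" "B' \<subseteq> B" and "x \<in> B'"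
  shows "(x \<in> OPT B \<longrightarrow> x \<in> OPT B') \<and>
         (x \<in> OPT B' \<longrightarrow> x \<notin> OPT B \<longrightarrow> (\<forall>i\<in>OPT B \<inter> B'. w x < w i))"
  using assms(4)
proof (induction "card {z\<in>U. w x < w z}" arbitrary: x rule: less_induct)
  case less
  have xU: "x \<in> U" using less.prems BF AU by auto
  have hv: "card {z\<in>U. w y < w z} < card {z\<in>U. w x < w z}" if "y \<in> U" "w x < w y" for y
    by (rule psubset_card_mono) (use that finU in auto)
  have partb: "w x < w i" if h: "x \<in> OPT B'" "x \<notin> OPT B" "i \<in> OPT B \<inter> B'" for i
  proof -
    have xB: "x \<in> B" using less.prems BF by auto
    obtain C where C: "C \<in> F" "x \<in> C" "C \<subseteq> B" "card (OPT B \<inter> C) = \<mu> C"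
      and heavy: "\<forall>y\<in>OPT B \<inter> C. w x < w y"
      using tight[OF BF(2) xB h(2)] by blast
    have "C \<subseteq> B' \<or> B' \<subseteq> C \<or> C \<inter> B' = {}" using lamD[OF C(1) BF(1)] .
    moreover have "C \<inter> B' \<noteq> {}" using C(2) less.prems by auto
    moreover have False if CB: "C \<subseteq> B'"
    proof -
      have sub: "insert x (OPT B \<inter> C) \<subseteq> OPT B' \<inter> C"
      proof
        fix y assume "y \<in> insert x (OPT B \<inter> C)"
        then consider "y = x" | "y \<in> OPT B \<inter> C" by auto
        then show "y \<in> OPT B' \<inter> C"
        proof cases
          case 1 then show ?thesis using h C by auto
        next
          case 2
          have yU: "y \<in> U" using 2 C AU by auto
          have "w x < w y" using heavy 2 by auto
          then have "y \<in> OPT B \<longrightarrow> y \<in> OPT B'" using less.hyps[OF hv[OF yU]] 2 CB by auto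
          then show ?thesis using 2 by auto
        qed
      qed
      have "card (insert x (OPT B \<inter> C)) \<le> card (OPT B' \<inter> C)"
        using sub finOPT[OF BF(1)] by (intro card_mono) auto
      moreover have "card (insert x (OPT B \<inter> C)) = \<mu> C + 1"
        using C(4) h(2) finOPT[OF BF(2)] by simp
      moreover have "card (OPT B' \<inter> C) \<le> \<mu> C" using indepD[OF OPTind[OF BF(1)] C(1)] .
      ultimately show False by simp
    qed
    ultimately have "B' \<subseteq> C" by auto
    then show ?thesis using heavy h(3) by auto
  qed
  have parta: "x \<in> OPT B'" if xX: "x \<in> OPT B"
  proof (rule ccontr)
    assume xY: "x \<notin> OPT B'"
    obtain C where C: "C \<in> F" "x \<in> C" "C \<subseteq> B'" "card (OPT B' \<inter> C) = \<mu> C"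
      and heavy: "\<forall>y\<in>OPT B' \<inter> C. w x < w y"
      using tight[OF BF(1) less.prems xY] by blast
    have sub: "insert x (OPT B' \<inter> C) \<subseteq> OPT B \<inter> C"
    proof
      fix y assume "y \<in> insert x (OPT B' \<inter> C)"
      then consider "y = x" | "y \<in> OPT B' \<inter> C" by auto
      then show "y \<in> OPT B \<inter> C"
      proof cases
        case 1 then show ?thesis using xX C by auto
      next
        case 2
        have yU: "y \<in> U" using 2 C AU by auto
        have wxy: "w x < w y" using heavy 2 by auto
        show ?thesis
        proof (rule ccontr)
          assume "y \<notin> OPT B \<inter> C"
          then have "y \<notin> OPT B" using 2 by auto
          then have "w y < w x" using less.hyps[OF hv[OF yU wxy]] 2 C xX less.prems by auto
          then show False using wxy by simp
        qed
      qed
    qed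
    have "card (insert x (OPT B' \<inter> C)) \<le> card (OPT B \<inter> C)"
      using sub finOPT[OF BF(2)] by (intro card_mono) auto
    moreover have "card (insert x (OPT B' \<inter> C)) = \<mu> C + 1"
      using C(4) xY finOPT[OF BF(1)] by simp
    moreover have "card (OPT B \<inter> C) \<le> \<mu> C" using indepD[OF OPTind[OF BF(2)] C(1)] .
    ultimately show False by simp
  qed
  show ?case using parta partb by blast
qed

lemma prefix:
  assumes "B' \<in> F" "B \<in> F" "B' \<subseteq> B" "j \<in> OPT B'" "i \<in> OPT B" "i \<in> B'" "w i < w j"
  shows "j \<in> OPT B"
proof (rule ccontr)
  assume "j \<notin> OPT B"
  moreover have "j \<in> B'" using assms OPTsub by auto
  ultimately have "w j < w i" using key[OF assms(1,2,3), of j] assms by auto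
  then show False using assms by simp
qed

lemma minset:
  assumes "i \<in> U"
  shows "minset F i \<in> F \<and> i \<in> minset F i \<and> (\<forall>A'\<in>F. i \<in> A' \<longrightarrow> minset F i \<subseteq> A')"
proof -
  define T where "T = {A\<in>F. i \<in> A}"
  have finT: "finite T" unfolding T_def using finF by simp
  have Tne: "T \<noteq> {}" unfolding T_def using UF assms by auto
  obtain M where M: "M \<in> T" "\<forall>E\<in>T. E \<subseteq> M \<longrightarrow> M = E"
    using finite_has_minimal[OF finT Tne] by auto
  let ?P = "\<lambda>A. A \<in> F \<and> i \<in> A \<and> (\<forall>A'\<in>F. i \<in> A' \<longrightarrow> A \<subseteq> A')"
  have PM: "?P M"
  proof -
    have "M \<subseteq> A'" if "A' \<in> F" "i \<in> A'" for A'
    proof -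
      have "M \<subseteq> A' \<or> A' \<subseteq> M \<or> M \<inter> A' = {}" using lamD[of M A'] M(1) that T_def by auto
      moreover have "A' \<subseteq> M \<Longrightarrow> M = A'" using M(2) that T_def by auto
      ultimately show ?thesis using that M(1) T_def by auto
    qed
    then show ?thesis using M(1) T_def by auto
  qed
  have "minset F i = M" unfolding minset_def
    by (rule the_equality) (use PM in auto)
  then show ?thesis using PM by simp
qed

lemma chain_eq:
  assumes "i \<in> U"
  shows "chain_between F (minset F i) B = {A \<in> {A\<in>F. A \<subseteq> B}. i \<in> A}"
proof -
  have m: "minset F i \<in> F" "i \<in> minset F i" "\<And>A'. A' \<in> F \<Longrightarrow> i \<in> A' \<Longrightarrow> minset F i \<subseteq> A'"
    using minset[OF assms] by auto
  show ?thesis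
  proof (rule set_eqI)
    fix A show "A \<in> chain_between F (minset F i) B \<longleftrightarrow> A \<in> {A \<in> {A\<in>F. A \<subseteq> B}. i \<in> A}"
      unfolding chain_between_def using m by auto
  qed
qed


lemma Hsum:
  assumes c: "0 < c" "c < 1" and finS: "finite S" and Sind: "\<forall>A\<in>F. card (S \<inter> A) \<le> \<mu> A"
  shows "H \<subseteq> F \<Longrightarrow> (\<forall>A\<in>H. \<mu> A \<le> K) \<Longrightarrow> card (S \<inter> \<Union>H) \<le> K + 1 \<Longrightarrow>
    (\<Sum>A\<in>H. c^(\<mu> A - card (S \<inter> A)) * csum c (card (S \<inter> A))) \<le> Fn c (card (S \<inter> \<Union>H)) K"
proof (induction "card H" arbitrary: H K rule: less_induct)
  case less
  show ?case
  proof (cases "H = {}")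
    case True then show ?thesis by (simp add: Fn0)
  next
    case False
    define hh where "hh A = c^(\<mu> A - card (S \<inter> A)) * csum c (card (S \<inter> A))" for A
    have finH: "finite H" using less.prems(1) finF finite_subset by blast
    obtain R where R: "R \<in> H" "\<forall>A\<in>H. R \<subseteq> A \<longrightarrow> R = A"
      using finite_has_maximal[OF finH False] by auto
    have RF: "R \<in> F" using R less.prems by auto
    define Hin where "Hin = {A\<in>H. A \<subset> R}"
    define Hout where "Hout = {A\<in>H. A \<inter> R = {}}"
    have cases3: "A = R \<or> A \<in> Hin \<or> A \<in> Hout" if "A \<in> H" for A
    proof -
      have AF: "A \<in> F" using that less.prems by auto
      have "A \<subseteq> R \<or> R \<subseteq> A \<or> A \<inter> R = {}" using lamD[OF AF RF] .
      then show ?thesis using R that unfolding Hin_def Hout_def by auto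
    qed
    have Hsplit: "H = insert R (Hin \<union> Hout)" using cases3 R(1) unfolding Hin_def Hout_def by auto
    have RnH: "R \<notin> Hin \<union> Hout" using Fne[OF RF] unfolding Hin_def Hout_def by auto
    have disj: "Hin \<inter> Hout = {}"
    proof (rule ccontr)
      assume "Hin \<inter> Hout \<noteq> {}"
      then obtain A where "A \<in> Hin" "A \<in> Hout" by auto
      then have "A = {}" "A \<in> F" unfolding Hin_def Hout_def using less.prems by auto
      then show False using Fne by auto
    qed
    have finin: "finite Hin" "finite Hout" using finH unfolding Hin_def Hout_def by auto
    have sumsplit: "(\<Sum>A\<in>H. hh A) = hh R + (\<Sum>A\<in>Hin. hh A) + (\<Sum>A\<in>Hout. hh A)"
      using Hsplit RnH disj finin by (simp add: sum.union_disjoint)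
    define mR where "mR = card (S \<inter> R)"
    have mRle: "mR \<le> \<mu> R" using Sind RF mR_def by auto
    have muR: "\<mu> R \<ge> 1" using mupos RF by auto
    have muK: "\<mu> R \<le> K" using less.prems R by auto
    have cin: "card Hin < card H" using Hsplit RnH finH
      by (metis Un_iff card_seteq insertI1 linorder_not_less subset_insertI2 sup_ge1)
    have inU: "\<Union>Hin \<subseteq> R" unfolding Hin_def by auto
    have ain: "card (S \<inter> \<Union>Hin) \<le> mR" unfolding mR_def using inU finS by (intro card_mono) auto
    have IHin: "(\<Sum>A\<in>Hin. hh A) \<le> Fn c (card (S \<inter> \<Union>Hin)) (\<mu> R - 1)"
      unfolding hh_def
    proof (rule less.hyps[OF cin])
      show "Hin \<subseteq> F" using less.prems unfolding Hin_def by auto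
      show "\<forall>A\<in>Hin. \<mu> A \<le> \<mu> R - 1"
      proof
        fix A assume "A \<in> Hin"
        then have "A \<in> F" "A \<subset> R" unfolding Hin_def using less.prems by auto
        then have "\<mu> A < \<mu> R" using mumono RF by auto
        then show "\<mu> A \<le> \<mu> R - 1" by simp
      qed
      show "card (S \<inter> \<Union>Hin) \<le> \<mu> R - 1 + 1" using ain mRle muR by simp
    qed
    also have "\<dots> \<le> Fn c mR (\<mu> R - 1)" using Fn_mono[OF c ain] mRle muR by simp
    finally have in1: "hh R + (\<Sum>A\<in>Hin. hh A) \<le> Fn c mR (\<mu> R)"
      using Fn_step[OF c mRle muR] unfolding hh_def mR_def by simp
    have in2: "Fn c mR (\<mu> R) \<le> Fn c mR K" using Fn_monoK[OF c muK] .
    have cout: "card Hout < card H" using Hsplit RnH finH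
      by (metis Un_iff card_seteq insertI1 linorder_not_less subset_insertI2 sup_ge2)
    have UH: "S \<inter> \<Union>H = (S \<inter> R) \<union> (S \<inter> \<Union>Hout)" using Hsplit inU by auto
    have UHd: "(S \<inter> R) \<inter> (S \<inter> \<Union>Hout) = {}" unfolding Hout_def by auto
    have cardUH: "card (S \<inter> \<Union>H) = mR + card (S \<inter> \<Union>Hout)"
      unfolding UH mR_def using finS UHd by (simp add: card_Un_disjoint)
    have IHout: "(\<Sum>A\<in>Hout. hh A) \<le> Fn c (card (S \<inter> \<Union>Hout)) K"
      unfolding hh_def
    proof (rule less.hyps[OF cout])
      show "Hout \<subseteq> F" using less.prems unfolding Hout_def by auto
      show "\<forall>A\<in>Hout. \<mu> A \<le> K" using less.prems unfolding Hout_def by auto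
      show "card (S \<inter> \<Union>Hout) \<le> K + 1" using less.prems(3) cardUH by simp
    qed
    have sup: "Fn c mR K + Fn c (card (S \<inter> \<Union>Hout)) K \<le> Fn c (card (S \<inter> \<Union>H)) K"
      using Fn_super[OF c, of mR "card (S \<inter> \<Union>Hout)" K] cardUH less.prems(3) by simp
    show ?thesis unfolding hh_def[symmetric] sumsplit using in1 in2 IHout sup by linarith
  qed
qed

lemma main:
  assumes c: "0 < c" "c < 1" and BF: "B \<in> F" and m: "m \<le> \<mu> B"
  shows "gfun F w OPT c m B \<le> Fn c m (\<mu> B)"
proof -
  define X where "X = OPT B"
  define S where "S = large w m X"
  define G where "G = {A\<in>F. A \<subseteq> B}"
  define r where "r i = card {j\<in>X. w i < w j}" for i
  have finX: "finite X" and XB: "X \<subseteq> B" using finOPT OPTsub BF X_def by auto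
  have XU: "X \<subseteq> U" using XB AU BF by auto
  have injX: "inj_on w X" using injw XU inj_on_subset by blast
  have SX: "S \<subseteq> X" unfolding S_def large_def by auto
  have finS: "finite S" using SX finX finite_subset by blast
  have Sdef: "i \<in> S \<longleftrightarrow> i \<in> X \<and> r i < m" for i unfolding S_def large_def r_def by auto
  have cardS: "card S \<le> m"
  proof -
    have bij: "bij_betw r X {..<card X}" using rank_bij[OF finX injX] unfolding r_def by simp
    then have "inj_on r S" using SX unfolding bij_betw_def using inj_on_subset by blast
    moreover have "r ` S \<subseteq> {..<m}" using Sdef by auto
    ultimately have "card S \<le> card {..<m}" by (intro card_inj_on_le) auto
    then show ?thesis by simp
  qed
  have Sind: "\<forall>A\<in>F. card (S \<inter> A) \<le> \<mu> A"
  proof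
    fix A assume A: "A \<in> F"
    have "card (S \<inter> A) \<le> card (X \<inter> A)" using SX finX by (intro card_mono) auto
    also have "\<dots> \<le> \<mu> A" using indepD[OF OPTind[OF BF] A] X_def by simp
    finally show "card (S \<inter> A) \<le> \<mu> A" .
  qed
  have finG: "finite G" unfolding G_def using finF by simp
  let ?f = "\<lambda>i A. c ^ (1 + brank w (OPT A) i)"
  have "gfun F w OPT c m B = (\<Sum>i\<in>S. \<Sum>A\<in>{A. A \<in> G \<and> i \<in> A}. ?f i A)"
    unfolding gfun_def S_def[symmetric] X_def[symmetric]
  proof (rule sum.cong)
    fix i assume "i \<in> S"
    then have "i \<in> U" using SX XU by auto
    then show "(\<Sum>A\<in>chain_between F (minset F i) B. ?f i A) = (\<Sum>A\<in>{A. A \<in> G \<and> i \<in> A}. ?f i A)"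
      using chain_eq[of i B] unfolding G_def by simp
  qed simp
  also have "\<dots> = (\<Sum>A\<in>G. \<Sum>i\<in>{i. i \<in> S \<and> i \<in> A}. ?f i A)"
    by (rule sum.swap_restrict[OF finS finG])
  also have "\<dots> \<le> (\<Sum>A\<in>G. c^(\<mu> A - card (S \<inter> A)) * csum c (card (S \<inter> A)))"
  proof (rule sum_mono)
    fix A assume AG: "A \<in> G"
    then have AF: "A \<in> F" and AB: "A \<subseteq> B" unfolding G_def by auto
    define T where "T = S \<inter> A"
    have Teq: "{i. i \<in> S \<and> i \<in> A} = T" unfolding T_def by auto
    define rT where "rT i = card {j\<in>T. w i < w j}" for i
    have finT: "finite T" using finS T_def by simp
    have TU: "T \<subseteq> U" using T_def SX XU by auto
    have injT: "inj_on w T" using injw TU inj_on_subset by blast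
    have nle: "card T \<le> \<mu> A" using Sind AF T_def by simp
    define Y where "Y = OPT A"
    have finY: "finite Y" and YA: "Y \<subseteq> A" and cY: "card Y = \<mu> A" using finOPT OPTsub cardopt AF Y_def by auto
    have YU: "Y \<subseteq> U" using YA AU AF by auto
    have bound: "?f i A \<le> c^(\<mu> A - rT i)" if iT: "i \<in> T" for i
    proof -
      have iU: "i \<in> U" using iT TU by auto
      have iX: "i \<in> X" "i \<in> A" "i \<in> S" using iT T_def SX by auto
      have cover: "Y \<subseteq> {j\<in>Y. w j < w i} \<union> {i} \<union> {j\<in>Y. w i < w j}"
      proof
        fix j assume jY: "j \<in> Y"
        have "j = i \<or> w j \<noteq> w i" using wdist[of j i] jY YU iU by auto
        then show "j \<in> {j\<in>Y. w j < w i} \<union> {i} \<union> {j\<in>Y. w i < w j}" using jY by auto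
      qed
      have Hsub: "{j\<in>Y. w i < w j} \<subseteq> {j\<in>T. w i < w j}"
      proof
        fix j assume j: "j \<in> {j\<in>Y. w i < w j}"
        have jX: "j \<in> X" using prefix[OF AF BF AB, of j i] j iX Y_def X_def by auto
        have jA: "j \<in> A" using j YA by auto
        have "{l\<in>X. w j < w l} \<subseteq> {l\<in>X. w i < w l}" using j by auto
        then have "r j \<le> r i" unfolding r_def using finX by (intro card_mono) auto
        then have "j \<in> S" using Sdef iX jX by auto
        then show "j \<in> {j\<in>T. w i < w j}" using j jA T_def by auto
      qed
      have "\<mu> A \<le> card ({j\<in>Y. w j < w i} \<union> {i} \<union> {j\<in>Y. w i < w j})"
        using cY card_mono[OF _ cover] finY by auto
      also have "\<dots> \<le> card ({j\<in>Y. w j < w i} \<union> {i}) + card {j\<in>Y. w i < w j}"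
        by (rule card_Un_le)
      also have "\<dots> \<le> card {j\<in>Y. w j < w i} + 1 + card {j\<in>Y. w i < w j}"
        using card_Un_le[of "{j\<in>Y. w j < w i}" "{i}"] by simp
      also have "\<dots> \<le> brank w (OPT A) i + 1 + rT i"
        using card_mono[OF _ Hsub] finT unfolding brank_def Y_def rT_def by auto
      finally have "\<mu> A - rT i \<le> 1 + brank w (OPT A) i" by simp
      then show ?thesis using c by (intro power_decreasing) auto
    qed
    have "(\<Sum>i\<in>{i. i \<in> S \<and> i \<in> A}. ?f i A) \<le> (\<Sum>i\<in>T. c^(\<mu> A - rT i))"
      unfolding Teq by (rule sum_mono) (rule bound)
    also have "\<dots> = (\<Sum>k\<in>{..<card T}. c^(\<mu> A - k))"
      using sum.reindex_bij_betw[OF rank_bij[OF finT injT], of "\<lambda>k. c^(\<mu> A - k)"]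
      unfolding rT_def by simp
    also have "\<dots> = c^(\<mu> A - card T) * csum c (card T)" using Gsum[OF c nle] by simp
    finally show "(\<Sum>i\<in>{i. i \<in> S \<and> i \<in> A}. ?f i A) \<le> c^(\<mu> A - card (S \<inter> A)) * csum c (card (S \<inter> A))"
      unfolding T_def .
  qed
  also have "\<dots> \<le> Fn c (card (S \<inter> \<Union>G)) (\<mu> B)"
  proof (rule Hsum[OF c finS Sind])
    show "G \<subseteq> F" unfolding G_def by auto
    show "\<forall>A\<in>G. \<mu> A \<le> \<mu> B"
    proof
      fix A assume "A \<in> G"
      then have "A \<in> F" "A \<subseteq> B" unfolding G_def by auto
      then show "\<mu> A \<le> \<mu> B"
      proof (cases "A = B")
        case False
        then have "A \<subset> B" using \<open>A \<subseteq> B\<close> by auto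
        have "\<forall>A'\<in>F. A \<subset> A' \<longrightarrow> \<mu> A < \<mu> A'" using mumono \<open>A \<in> F\<close> by (rule bspec)
        then have "\<mu> A < \<mu> B" using BF \<open>A \<subset> B\<close> by blast
        then show ?thesis by simp
      qed simp
    qed
    have "card (S \<inter> \<Union>G) \<le> card S" using finS by (intro card_mono) auto
    then show "card (S \<inter> \<Union>G) \<le> \<mu> B + 1" using cardS m by simp
  qed
  also have "\<dots> \<le> Fn c m (\<mu> B)"
  proof (rule Fn_mono[OF c])
    show "card (S \<inter> \<Union>G) \<le> m" using cardS finS card_mono[of S "S \<inter> \<Union>G"] by auto
  qed (use m in simp)
  finally show ?thesis .
qed

end


theorem mainTheorem4:
  fixes U :: "'a set" and w :: "'a \<Rightarrow> real" and F :: "'a set set"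
    and \<mu> :: "'a set \<Rightarrow> nat" and OPT :: "'a set \<Rightarrow> 'a set"
    and c :: real and B :: "'a set" and m :: nat
  assumes "finite U"
    and "\<forall>i\<in>U. w i \<ge> 0"
    and "inj_on w U"
    and "laminar F" and "U \<in> F" and "\<forall>A\<in>F. A \<subseteq> U"
    and "\<forall>A\<in>F. \<mu> A > 0"
    and "\<forall>A\<in>F. \<forall>A'\<in>F. A \<subset> A' \<longrightarrow> \<mu> A < \<mu> A'"
    and "\<forall>A\<in>F. is_OPT F \<mu> w A (OPT A)"
    and "\<forall>A\<in>F. card (OPT A) = \<mu> A"
    and "0 < c" and "c < 1/2"
    and "B \<in> F" and "m \<le> \<mu> B"
  shows "gfun F w OPT c m B \<le>
    2 * (\<Sum>j=1..<m. csum c j) + csum c m + csum c m * csum c (\<mu> B - m)"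
proof -
  have L: "lam U w F \<mu> OPT"
    by (rule lam.intro) (use assms in auto)
  have c: "0 < c" "c < 1" using assms by auto
  have "gfun F w OPT c m B \<le> Fn c m (\<mu> B)" using lam.main[OF L c assms(13,14)] .
  also have "\<dots> = 2 * (\<Sum>j=1..<m. csum c j) + csum c m + csum c m * csum c (\<mu> B - m)"
    using Fn_final[OF c assms(14)] .
  finally show ?thesis .
qed

end
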